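(* Let $b\ge 2$ and $n\ge 0$ be integers. Then $\max \mathrm{Ap}(T_b(n),s_0) = w(s_0-(b-1))$, where $w(r)$ denotes the least element of $T_b(n)$ congruent to $r$ modulo $s_0$.
   Context: For integers $b\ge 2$, $n\ge 0$, $i\ge0$ put $s_i=(b+1)b^{n+i}-1$ and $T_b(n)=\langle\{s_i:i\in\mathbb{N}\}\rangle$ (a numerical semigroup). For a numerical semigroup $S$ and $x\in S\setminus\{0\}$, $\mathrm{Ap}(S,x)=\{s\in S: s-x\notin S\}$. *)

theory Defs
  imports Main "HOL-Number_Theory.Cong"
begin

definition sgen :: "nat \<Rightarrow> nat \<Rightarrow> nat \<Rightarrow> nat" where
  "sgen b n i = (b + 1) * b ^ (n + i) - 1"

inductive_set monoid_gen :: "nat set \<Rightarrow> nat set" for A :: "nat set" where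
  zero: "0 \<in> monoid_gen A"
| add: "a \<in> A \<Longrightarrow> x \<in> monoid_gen A \<Longrightarrow> a + x \<in> monoid_gen A"

definition T :: "nat \<Rightarrow> nat \<Rightarrow> nat set" where
  "T b n = monoid_gen (range (sgen b n))"

text \<open>Apery set Ap(S,x) = {s in S. s - x notin S}, with integer subtraction
  (s - x is not in S whenever s < x).\<close>
definition Apery :: "nat set \<Rightarrow> nat \<Rightarrow> nat set" where
  "Apery S x = {s \<in> S. \<not> (x \<le> s \<and> s - x \<in> S)}"

definition wmin :: "nat set \<Rightarrow> nat \<Rightarrow> nat \<Rightarrow> nat" where
  "wmin S m r = (LEAST t. t \<in> S \<and> [t = r] (mod m))"

end

theory Submission
  imports Defs
begin

inductive Qr :: "nat \<Rightarrow> nat \<Rightarrow> nat \<Rightarrow> bool" for b where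
  Qz: "Qr b 0 0"
| Qs: "Qr b N d \<Longrightarrow> Qr b (N + b^i) (d + (b^i - 1))"

lemma Qr_split: "Qr b N d \<Longrightarrow> Qr b (N + c*b^j) (d + c*(b^j - 1))"
proof (induction c)
  case 0 then show ?case by simp
next
  case (Suc c)
  have "Qr b (N + c*b^j + b^j) (d + c*(b^j - 1) + (b^j - 1))" by (rule Qs[OF Suc.IH[OF Suc.prems]])
  moreover have "N + c*b^j + b^j = N + Suc c * b^j" by simp
  moreover have "d + c*(b^j - 1) + (b^j - 1) = d + Suc c * (b^j - 1)" by (simp only: mult_Suc add_ac)
  ultimately show ?case by metis
qed

lemma Qr_mono: "Qr b N d \<Longrightarrow> Qr b (N + c) d"
  using Qr_split[of b N d c 0] by simp

lemma Qr_dec1: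
  assumes "b \<ge> 2" shows "Qr b N d \<Longrightarrow> b - 1 \<le> d \<Longrightarrow> Qr b N (d - (b-1))"
proof (induction rule: Qr.induct)
  case Qz then show ?case using assms by simp
next
  case (Qs N d i)
  have pos: "b^i \<ge> 1" using assms by simp
  show ?case
  proof (cases "b - 1 \<le> d")
    case True
    from Qr.Qs[OF Qs.IH[OF True], of i] True pos show ?thesis
      by (simp add: algebra_simps)
  next
    case False
    have "i \<noteq> 0"
    proof
      assume "i = 0" then show False using Qs.prems False by simp
    qed
    then obtain j where i: "i = Suc j" by (cases i) auto
    have pj: "b^j \<ge> 1" using assms by simp
    have "Qr b (N + b*b^j) (d + b*(b^j - 1))" using Qr_split[OF Qs.hyps, of b j] .
    moreover have "d + b*(b^j - 1) = d + (b^i - 1) - (b - 1)"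
    proof -
      have "b * b^j \<ge> b" using pj by simp
      then show ?thesis using i pj assms by (simp add: right_diff_distrib')
    qed
    ultimately show ?thesis using i by simp
  qed
qed

lemma Qr_dec:
  assumes "b \<ge> 2" "Qr b N d" shows "c*(b-1) \<le> d \<Longrightarrow> Qr b N (d - c*(b-1))"
proof (induction c)
  case 0 then show ?case using assms by simp
next
  case (Suc c)
  then have h: "Qr b N (d - c*(b-1))" by simp
  have "b - 1 \<le> d - c*(b-1)" using Suc.prems by simp
  from Qr_dec1[OF assms(1) h this] show ?case
    by (simp add: diff_diff_add add.commute)
qed

lemma pow_minus_one_dvd: "(b::nat) \<ge> 1 \<Longrightarrow> (b - 1) dvd (b^k - 1)"
proof (induction k)
  case 0 then show ?case by simp
next
  case (Suc k)
  have eq: "b^Suc k - 1 = b * (b^k - 1) + (b - 1)"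
    using Suc.prems by (simp add: right_diff_distrib')
  have "(b - 1) dvd b * (b^k - 1) + (b - 1)" using Suc by (intro dvd_add) simp_all
  then show ?case by (subst eq)
qed

lemma Qr_dvd: assumes "b \<ge> 1" shows "Qr b N d \<Longrightarrow> (b - 1) dvd d"
proof (induction rule: Qr.induct)
  case Qz then show ?case by simp
next
  case (Qs N d i)
  show ?case using Qs.IH pow_minus_one_dvd[OF assms, of i] by (rule dvd_add)
qed

lemma aux_AB: "(A::nat) \<ge> 1 \<Longrightarrow> B \<ge> 1 \<Longrightarrow> A*B - 1 = (A-1)*B + (B-1)"
  by (cases A; cases B) auto

lemma sgen_eq: "b \<ge> 2 \<Longrightarrow> sgen b n i = sgen b n 0 * b^i + (b^i - 1)"
proof -
  assume b: "b \<ge> 2"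
  have p0: "b^n \<ge> 1" using b by simp
  have p1: "(b+1)*b^n \<ge> 1" using p0 by (simp add: le_add2 trans_le_add1)
  have p2: "b^i \<ge> 1" using b by simp
  have "sgen b n i = ((b+1)*b^n) * b^i - 1" unfolding sgen_def power_add by (simp only: mult.assoc)
  also have "\<dots> = ((b+1)*b^n - 1) * b^i + (b^i - 1)" by (rule aux_AB[OF p1 p2])
  also have "(b+1)*b^n - 1 = sgen b n 0" by (simp add: sgen_def)
  finally show ?thesis .
qed

lemma T_rep: assumes "b \<ge> 2" "x \<in> T b n" shows "\<exists>N d. Qr b N d \<and> x = sgen b n 0 * N + d"
  using assms(2) unfolding T_def
proof (induction rule: monoid_gen.induct)
  case zero have "Qr b 0 0 \<and> 0 = sgen b n 0 * 0 + 0" by (simp add: Qz)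
  then show ?case by blast
next
  case (add a x)
  then obtain N d where Nd: "Qr b N d" "x = sgen b n 0 * N + d" by blast
  from add.hyps(1) obtain i where a: "a = sgen b n i" by blast
  have "Qr b (N + b^i) (d + (b^i - 1))" using Qs[OF Nd(1)] .
  moreover have "a + x = sgen b n 0 * (N + b^i) + (d + (b^i - 1))"
    unfolding a Nd(2) sgen_eq[OF assms(1), of n i] distrib_left by (simp only: add_ac)
  ultimately show ?case by blast
qed

lemma rep_T: assumes "b \<ge> 2" shows "Qr b N d \<Longrightarrow> sgen b n 0 * N + d \<in> T b n"
proof (induction rule: Qr.induct)
  case Qz then show ?case by (simp add: T_def monoid_gen.zero)
next
  case (Qs N d i)
  have "sgen b n i + (sgen b n 0 * N + d) \<in> T b n"
    using Qs by (auto simp: T_def intro: monoid_gen.add)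
  moreover have "sgen b n i + (sgen b n 0 * N + d) = sgen b n 0 * (N + b^i) + (d + (b^i - 1))"
    unfolding sgen_eq[OF assms, of n i] distrib_left by (simp only: add_ac)
  ultimately show ?case by simp
qed

lemma cong_r0: "(k::nat) \<le> m \<Longrightarrow> [t = m - k] (mod m) \<longleftrightarrow> m dvd (t + k)"
proof -
  assume "k \<le> m"
  have "[t = m - k] (mod m) \<longleftrightarrow> [t + k = m - k + k] (mod m)"
    using cong_add_rcancel_nat by metis
  also have "\<dots> \<longleftrightarrow> [t + k = 0] (mod m)" using \<open>k \<le> m\<close>
    by (simp add: cong_def)
  also have "\<dots> \<longleftrightarrow> m dvd (t + k)" by (simp add: cong_0_iff)
  finally show ?thesis .
qed

theorem mainTheorem8:
  fixes b n :: nat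
  assumes "b \<ge> 2"
  shows "Max (Apery (T b n) (sgen b n 0))
           = wmin (T b n) (sgen b n 0) (sgen b n 0 - (b - 1))"
proof -
  define m where "m = sgen b n 0"
  define D where "D = (b-1)*(m-1)"
  have b: "b \<ge> 2" by fact
  have mge: "m \<ge> b"
  proof -
    have "b^n \<ge> 1" using b by simp
    then have "(b+1)*b^n \<ge> (b + 1) * 1" by (rule mult_le_mono2)
    then show ?thesis unfolding m_def sgen_def by simp
  qed
  have mpos: "m > 0" using mge b by simp
  have cop: "coprime m (b - 1)"
  proof (rule coprimeI)
    fix c assume c1: "c dvd m" and c2: "c dvd b - 1"
    have "(b - 1) dvd (b^(Suc n) - 1)" using b by (intro pow_minus_one_dvd) simp
    moreover have "(b - 1) dvd (b^n - 1)" using b by (intro pow_minus_one_dvd) simp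
    moreover have "m - 1 = (b^(Suc n) - 1) + (b^n - 1)"
    proof -
      have h1: "b^n \<ge> 1" using b by simp
      have h2: "b * b^n \<ge> 1" using b by (metis power_Suc one_le_power le_trans one_le_numeral)
      show ?thesis using h1 h2 unfolding m_def sgen_def by (simp add: algebra_simps)
    qed
    ultimately have "(b - 1) dvd (m - 1)" by simp
    then have "c dvd m - 1" using c2 dvd_trans by blast
    then have "c dvd m - (m - 1)" using c1 dvd_diff_nat by blast
    then show "is_unit c" using mpos by simp
  qed
  define P where "P = (\<lambda>t. t \<in> T b n \<and> [t = m - (b - 1)] (mod m))"
  have Piff: "\<And>t. P t \<longleftrightarrow> t \<in> T b n \<and> m dvd (t + (b - 1))"
    unfolding P_def using cong_r0[of "b-1" m] mge by auto
  have ex: "P (m * ((m-1)*b) + D)"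
  proof -
    have "Qr b (0 + (m-1)*b^1) (0 + (m-1)*(b^1 - 1))" using Qr_split[OF Qz] .
    then have "Qr b ((m-1)*b) D" unfolding D_def by (simp add: mult.commute)
    then have "m * ((m-1)*b) + D \<in> T b n" using rep_T[OF b] unfolding m_def by blast
    moreover have "m * ((m-1)*b) + D + (b - 1) = m * ((m-1)*b + (b - 1))"
      unfolding D_def using mpos b by (cases m; cases b) (auto simp: algebra_simps)
    ultimately show ?thesis using Piff by simp
  qed
  define W where "W = (LEAST t. P t)"
  have Wdef: "wmin (T b n) (sgen b n 0) (sgen b n 0 - (b - 1)) = W"
    unfolding W_def wmin_def P_def m_def ..
  have PW: "P W" unfolding W_def using ex by (rule LeastI)
  have Wle: "\<And>t. P t \<Longrightarrow> W \<le> t" unfolding W_def by (rule Least_le)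
  have WAp: "W \<in> Apery (T b n) m"
  proof -
    have "\<not> (m \<le> W \<and> W - m \<in> T b n)"
    proof
      assume h: "m \<le> W \<and> W - m \<in> T b n"
      then have "W - m + (b - 1) + m = W + (b - 1)" by simp
      then have "m dvd (W - m + (b - 1))" using PW Piff
        by (metis dvd_add_left_iff dvd_refl)
      then have "P (W - m)" using h Piff by simp
      then have "W \<le> W - m" by (rule Wle)
      then show False using h mpos by arith
    qed
    then show ?thesis using PW unfolding Apery_def P_def by simp
  qed
  obtain Ns ds where Wr: "Qr b Ns ds" "W = m * Ns + ds"
    using T_rep[OF b] PW unfolding P_def m_def by blast
  have dsD: "D \<le> ds"
  proof -
    obtain j where j: "ds = (b - 1) * j" using Qr_dvd[OF _ Wr(1)] b by fastforce
    have "m dvd (W + (b - 1))" using PW Piff by simp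
    then have "m dvd (ds + (b - 1))" using Wr(2) by (simp add: add.assoc dvd_add_right_iff)
    moreover have e: "(b - 1) * (j + 1) = ds + (b - 1)" unfolding j by simp
    ultimately have "m dvd (b - 1) * (j + 1)" by (simp add: add.commute)
    then have "m dvd j + 1" using cop coprime_dvd_mult_right_iff by blast
    then have "m \<le> j + 1" by (simp add: dvd_imp_le)
    then have "m - 1 \<le> j" by simp
    then show ?thesis unfolding D_def j by simp
  qed
  have bound: "\<And>x. x \<in> Apery (T b n) m \<Longrightarrow> x \<le> W"
  proof -
    fix x assume xA: "x \<in> Apery (T b n) m"
    then have xT: "x \<in> T b n" and nA: "\<not> (m \<le> x \<and> x - m \<in> T b n)"
      unfolding Apery_def by auto
    obtain N d where r: "Qr b N d" "x = m * N + d" using T_rep[OF b xT] unfolding m_def by blast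
    obtain j where j: "d = (b - 1) * j" using Qr_dvd[OF _ r(1)] b by fastforce
    have jm: "j < m"
    proof (rule ccontr)
      assume "\<not> j < m"
      then have dge: "m * (b - 1) \<le> d" using j by (simp add: mult.commute)
      have "Qr b (N + (b - 2)) d" using Qr_mono[OF r(1)] .
      then have "Qr b (N + (b - 2)) (d - m*(b-1))" using Qr_dec[OF b _ dge] by blast
      then have "m * (N + (b - 2)) + (d - m*(b-1)) \<in> T b n" using rep_T[OF b] unfolding m_def by blast
      moreover have "m * (N + (b - 2)) + (d - m*(b-1)) = x - m"
      proof -
        have "b - 1 = (b - 2) + 1" using b by simp
        then have "m * (b - 1) = m * (b - 2) + m" by (metis mult.right_neutral distrib_left)
        then show ?thesis using r(2) dge by (simp add: algebra_simps)
      qed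
      moreover have "m \<le> x"
      proof -
        have "m * 1 \<le> m * (b - 1)" using b by (intro mult_le_mono2) simp
        then show ?thesis using r(2) dge by linarith
      qed
      ultimately show False using nA by simp
    qed
    have dD: "d \<le> D" unfolding D_def j using jm by (intro mult_le_mono2) simp
    have NN: "N \<le> Ns"
    proof (rule ccontr)
      assume "\<not> N \<le> Ns"
      define c where "c = N - 1 - Ns"
      have c: "N - 1 = Ns + c" "N \<ge> 1" using \<open>\<not> N \<le> Ns\<close> unfolding c_def by auto
      have h1: "Qr b (N - 1) ds" using Qr_mono[OF Wr(1)] c(1) by simp
      obtain js where js: "ds = (b - 1) * js" using Qr_dvd[OF _ Wr(1)] b by fastforce
      have "j \<le> js" using dD dsD j js b by (simp add: D_def)
      then have le: "(js - j)*(b-1) \<le> ds" using js by (simp add: mult.commute)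
      have "ds - (js - j)*(b-1) = d" using js j \<open>j \<le> js\<close>
        by (simp add: diff_mult_distrib mult.commute)
      then have "Qr b (N - 1) d" using Qr_dec[OF b h1 le] by simp
      then have "m * (N - 1) + d \<in> T b n" using rep_T[OF b] unfolding m_def by blast
      moreover have "m * (N - 1) + d = x - m" using r(2) c(2)
        by (simp add: right_diff_distrib')
      moreover have "m \<le> x"
      proof -
        have "m * 1 \<le> m * N" using c(2) by (intro mult_le_mono2)
        then show ?thesis using r(2) by linarith
      qed
      ultimately show False using nA by simp
    qed
    show "x \<le> W" using r(2) Wr(2) NN dD dsD by (simp add: add_mono)
  qed
  have fin: "finite (Apery (T b n) m)"
    by (rule finite_subset[of _ "{..W}"]) (auto dest: bound)
  have "Max (Apery (T b n) m) = W"
    using fin WAp bound by (intro Max_eqI) auto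
  then show ?thesis using Wdef unfolding m_def by simp
qed

end
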